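(* Let $f$ be an orientation-preserving homeomorphism of the circle $\mathbb T=\mathbb R/\mathbb Z$ whose rotation number $\rho(f)$ is rational. Assume $f$ is not topologically conjugate to a rotation. Then ${\rm h_{pol}}(f)=1$.
   Context: The rotation number of $f$ is the class in $\mathbb T$ of $\lim_{n\to\infty}F^n(x)/n$ for a lift $F:\mathbb R\to\mathbb R$ of $f$ (independent of $x$). Polynomial entropy: with $d_n^f(x,y)=\max_{0\le k\le n-1}d(f^k(x),f^k(y))$ for the standard metric $d$ on $\mathbb T$ and $G_n^f(\varepsilon)$ the minimal number of $d_n^f$-balls of radius $\varepsilon$ covering $\mathbb T$, ${\rm h_{pol}}(f)=\lim_{\varepsilon\to0}\limsup_{n\to\infty}\frac{\log G_n^f(\varepsilon)}{\log n}$. *)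

theory Defs
  imports "HOL-Analysis.Analysis"
begin

text \<open>The circle T = R/Z is represented by the fundamental domain {0..<1}; a real number
  represents its class, and the projection to the fundamental domain is frac.\<close>

definition circle :: "real set" where
  "circle = {0..<1}"

definition circ_dist :: "real \<Rightarrow> real \<Rightarrow> real" where
  "circ_dist x y = \<bar>x - y - of_int (round (x - y))\<bar>"

text \<open>Lifts of orientation-preserving homeomorphisms of T: continuous strictly increasing
  maps R \<rightarrow> R commuting with the unit translation.\<close>
definition circle_lift :: "(real \<Rightarrow> real) \<Rightarrow> bool" where
  "circle_lift F \<longleftrightarrow> continuous_on UNIV F \<and> strict_mono F \<and> (\<forall>x. F (x + 1) = F x + 1)"

definition circ_map :: "(real \<Rightarrow> real) \<Rightarrow> real \<Rightarrow> real" where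
  "circ_map F x = frac (F x)"

text \<open>Rotation number (as real number; its class in T is the rotation number of f).\<close>
definition rot_num :: "(real \<Rightarrow> real) \<Rightarrow> real" where
  "rot_num F = lim (\<lambda>n. (F ^^ n) 0 / real n)"

definition rotation :: "real \<Rightarrow> real \<Rightarrow> real" where
  "rotation a x = frac (x + a)"

definition circ_continuous :: "(real \<Rightarrow> real) \<Rightarrow> bool" where
  "circ_continuous h \<longleftrightarrow> (\<forall>x\<in>circle. \<forall>e>0. \<exists>d>0. \<forall>y\<in>circle.
       circ_dist x y < d \<longrightarrow> circ_dist (h x) (h y) < e)"

definition circ_homeomorphism :: "(real \<Rightarrow> real) \<Rightarrow> (real \<Rightarrow> real) \<Rightarrow> bool" where
  "circ_homeomorphism h g \<longleftrightarrow>
     h ` circle \<subseteq> circle \<and> g ` circle \<subseteq> circle \<and>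
     (\<forall>x\<in>circle. g (h x) = x) \<and> (\<forall>y\<in>circle. h (g y) = y) \<and>
     circ_continuous h \<and> circ_continuous g"

definition conj_to_rotation :: "(real \<Rightarrow> real) \<Rightarrow> bool" where
  "conj_to_rotation F \<longleftrightarrow> (\<exists>h g a. circ_homeomorphism h g \<and>
      (\<forall>x\<in>circle. h (circ_map F x) = rotation a (h x)))"

definition bowen_dist :: "(real \<Rightarrow> real) \<Rightarrow> nat \<Rightarrow> real \<Rightarrow> real \<Rightarrow> real" where
  "bowen_dist F n x y = Max {circ_dist ((circ_map F ^^ k) x) ((circ_map F ^^ k) y) | k. k < n}"

definition cover_num :: "(real \<Rightarrow> real) \<Rightarrow> nat \<Rightarrow> real \<Rightarrow> nat" where
  "cover_num F n eps = Inf {card C | C. finite C \<and> C \<subseteq> circle \<and>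
      (\<forall>x\<in>circle. \<exists>c\<in>C. bowen_dist F n x c < eps)}"

definition hpol_eps :: "(real \<Rightarrow> real) \<Rightarrow> real \<Rightarrow> ereal" where
  "hpol_eps F eps = limsup (\<lambda>n. ereal (ln (real (cover_num F n eps)) / ln (real n)))"

end

theory Submission
  imports Defs "HOL-Library.Liminf_Limsup"
begin


lemma cl_cont: "circle_lift F \<Longrightarrow> continuous_on UNIV F"
  by (simp add: circle_lift_def)
lemma cl_mono: "circle_lift F \<Longrightarrow> strict_mono F"
  by (simp add: circle_lift_def)
lemma cl_per: "circle_lift F \<Longrightarrow> F (x + 1) = F x + 1"
  by (simp add: circle_lift_def)

lemma cl_int: assumes "circle_lift F" shows "F (x + of_int m) = F x + of_int m"
proof (induction m arbitrary: x rule: int_induct[where k=0])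
  case base then show ?case by simp
next
  case (step1 i) then show ?case using cl_per[OF assms, of "x + of_int i"] by (simp add: add.assoc)
next
  case (step2 i)
  have "F (x + of_int (i - 1)) + 1 = F (x + of_int i)"
    using cl_per[OF assms, of "x + of_int (i - 1)"] by (simp add: add.assoc)
  then show ?case using step2 by simp
qed

lemma cl_nat: assumes "circle_lift F" shows "F (x + of_nat m) = F x + of_nat m"
  using cl_int[OF assms, of x "int m"] by simp

lemma cl_comp: assumes "circle_lift F" "circle_lift G" shows "circle_lift (F \<circ> G)"
  using assms unfolding circle_lift_def
  by (auto intro: continuous_on_compose2 strict_mono_o simp: strict_mono_def)

lemma cl_id: "circle_lift id"
  unfolding circle_lift_def by (auto simp: strict_mono_def)

lemma cl_pow: assumes "circle_lift F" shows "circle_lift (F ^^ n)"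
proof (induction n)
  case 0 then show ?case using cl_id by (simp add: id_def)
next
  case (Suc n) then show ?case using cl_comp[OF assms Suc] by (simp add: comp_def)
qed

lemma cl_shift: assumes "circle_lift F" shows "circle_lift (\<lambda>x. F x - c)"
  using assms unfolding circle_lift_def
  by (auto intro!: continuous_intros simp: strict_mono_def)

lemma cl_mono_le: "circle_lift F \<Longrightarrow> x \<le> y \<Longrightarrow> F x \<le> F y"
  using cl_mono strict_mono_leD by blast
lemma cl_less_iff: "circle_lift F \<Longrightarrow> F x < F y \<longleftrightarrow> x < y"
  using cl_mono strict_mono_less by blast
lemma cl_le_iff: "circle_lift F \<Longrightarrow> F x \<le> F y \<longleftrightarrow> x \<le> y"
  using cl_mono strict_mono_less_eq by blast
lemma cl_isCont: "circle_lift F \<Longrightarrow> isCont F x"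
  using cl_cont continuous_on_eq_continuous_at by blast
lemma cl_cont_on: "circle_lift F \<Longrightarrow> continuous_on S F"
  using cl_cont continuous_on_subset by blast

lemma frac_F_frac: assumes "circle_lift F" shows "frac (F (frac y)) = frac (F y)"
proof -
  have "F (frac y) = F y + of_int (- \<lfloor>y\<rfloor>)"
    using cl_int[OF assms, of y "- \<lfloor>y\<rfloor>"] by (simp add: frac_def)
  then show ?thesis using frac_add_of_int_right[of "F y" "- \<lfloor>y\<rfloor>"] by simp
qed

lemma cm_pow: assumes "circle_lift F" shows "(circ_map F ^^ k) (frac x) = frac ((F ^^ k) x)"
proof (induction k)
  case 0 then show ?case by simp
next
  case (Suc k) then show ?case
    using frac_F_frac[OF assms, of "(F ^^ k) x"] by (simp add: circ_map_def)
qed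

lemma cd_le: "circ_dist x y \<le> \<bar>x - y - of_int m\<bar>"
  unfolding circ_dist_def by (rule round_diff_minimal)
lemma cd_le0: "circ_dist x y \<le> \<bar>x - y\<bar>"
  using cd_le[of x y 0] by simp
lemma cd_int: "circ_dist (x + of_int m) y = circ_dist x y"
proof -
  have "circ_dist (x + of_int m) y \<le> circ_dist x y"
    using cd_le[of "x + of_int m" y "round (x - y) + m"] unfolding circ_dist_def by (simp add: algebra_simps)
  moreover have "circ_dist x y \<le> circ_dist (x + of_int m) y"
    using cd_le[of x y "round (x + of_int m - y) - m"] unfolding circ_dist_def by (simp add: algebra_simps)
  ultimately show ?thesis by simp
qed

lemma cd_sym: "circ_dist x y = circ_dist y x"
proof -
  have "circ_dist y x \<le> circ_dist x y"
    using cd_le[of y x "- round (x - y)"] unfolding circ_dist_def by (simp add: abs_minus_commute algebra_simps)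
  moreover have "circ_dist x y \<le> circ_dist y x"
    using cd_le[of x y "- round (y - x)"] unfolding circ_dist_def by (simp add: abs_minus_commute algebra_simps)
  ultimately show ?thesis by simp
qed

lemma cd_tri: "circ_dist x z \<le> circ_dist x y + circ_dist y z"
proof -
  have "circ_dist x z \<le> \<bar>x - z - of_int (round (x - y) + round (y - z))\<bar>" by (rule cd_le)
  also have "\<dots> \<le> circ_dist x y + circ_dist y z" unfolding circ_dist_def by simp
  finally show ?thesis .
qed

lemma cd_int2: "circ_dist x (y + of_int m) = circ_dist x y"
  using cd_int[of y m x] cd_sym by metis

lemma cd_frac: "circ_dist (frac x) (frac y) = circ_dist x y"
proof -
  have "frac x = x + of_int (- \<lfloor>x\<rfloor>)" "frac y = y + of_int (- \<lfloor>y\<rfloor>)" by (simp_all add: frac_def)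
  then show ?thesis by (simp only: cd_int cd_int2)
qed

lemma cd_lower: assumes "s \<le> x - y" "x - y \<le> u" "0 < s" "u < 1"
  shows "min s (1 - u) \<le> circ_dist x y"
proof (cases "round (x - y) \<le> 0")
  case True
  then have "real_of_int (round (x - y)) \<le> 0" by simp
  then show ?thesis using assms unfolding circ_dist_def by (simp add: abs_if min_def)
next
  case False
  then have "real_of_int (round (x - y)) \<ge> 1" by simp
  then show ?thesis using assms unfolding circ_dist_def by (simp add: abs_if min_def)
qed



lemma disp: assumes "circle_lift H" shows "\<bar>H x - x - H 0\<bar> < 1"
proof -
  define z where "z = x - of_int \<lfloor>x\<rfloor>"
  have z: "0 \<le> z" "z < 1" unfolding z_def by linarith+
  have "H x = H z + of_int \<lfloor>x\<rfloor>" using cl_int[OF assms, of z "\<lfloor>x\<rfloor>"] by (simp add: z_def)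
  moreover have "H 0 \<le> H z" using cl_mono_le[OF assms z(1)] .
  moreover have "H z < H 1" using cl_less_iff[OF assms] z(2) by simp
  moreover have "H 1 = H 0 + 1" using cl_per[OF assms, of 0] by simp
  ultimately have "H x - x - H 0 = (H z - H 0) - z" "H z - H 0 < 1" "0 \<le> H z - H 0"
    unfolding z_def by simp_all
  then show ?thesis using z by (simp only: abs_less_iff) linarith
qed

lemma a_add: assumes "circle_lift F"
  shows "\<bar>(F ^^ (m + n)) 0 - (F ^^ n) 0 - (F ^^ m) 0\<bar> < 1"
  using disp[OF cl_pow[OF assms, of m], of "(F ^^ n) 0"] by (simp add: funpow_add)

lemma a_mult: assumes "circle_lift F"
  shows "\<bar>(F ^^ (k * m)) 0 - real k * (F ^^ m) 0\<bar> \<le> real k"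
proof (induction k)
  case 0 then show ?case by simp
next
  case (Suc k)
  have "\<bar>(F ^^ (m + k * m)) 0 - (F ^^ (k * m)) 0 - (F ^^ m) 0\<bar> < 1" by (rule a_add[OF assms])
  moreover have "Suc k * m = m + k * m" by simp
  moreover have "real (Suc k) * (F ^^ m) 0 = real k * (F ^^ m) 0 + (F ^^ m) 0" by (simp add: algebra_simps)
  ultimately show ?case using Suc unfolding abs_le_iff abs_less_iff by (simp only:) linarith
qed

lemma a_cmp: assumes "circle_lift F" "m \<ge> 1" "n \<ge> 1"
  shows "\<bar>(F ^^ m) 0 / m - (F ^^ n) 0 / n\<bar> \<le> 1 / m + 1 / n"
proof -
  have m: "real m > 0" and n: "real n > 0" using assms by auto
  have 1: "\<bar>(F ^^ (n * m)) 0 - real n * (F ^^ m) 0\<bar> \<le> real n" by (rule a_mult[OF assms(1)])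
  have 2: "\<bar>(F ^^ (m * n)) 0 - real m * (F ^^ n) 0\<bar> \<le> real m" by (rule a_mult[OF assms(1)])
  have e1: "\<bar>(F ^^ (n * m)) 0 / (real n * real m) - (F ^^ m) 0 / m\<bar> \<le> 1 / m"
  proof -
    have "\<bar>(F ^^ (n * m)) 0 / (real n * real m) - (F ^^ m) 0 / m\<bar>
        = \<bar>(F ^^ (n * m)) 0 - real n * (F ^^ m) 0\<bar> / (real n * real m)"
      using m n by (simp add: field_simps abs_divide)
    also have "\<dots> \<le> real n / (real n * real m)" by (rule divide_right_mono[OF 1]) (use m n in simp)
    also have "\<dots> = 1 / m" using n by simp
    finally show ?thesis .
  qed
  have e2: "\<bar>(F ^^ (m * n)) 0 / (real m * real n) - (F ^^ n) 0 / n\<bar> \<le> 1 / n"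
  proof -
    have "\<bar>(F ^^ (m * n)) 0 / (real m * real n) - (F ^^ n) 0 / n\<bar>
        = \<bar>(F ^^ (m * n)) 0 - real m * (F ^^ n) 0\<bar> / (real m * real n)"
      using m n by (simp add: field_simps abs_divide)
    also have "\<dots> \<le> real m / (real m * real n)" by (rule divide_right_mono[OF 2]) (use m n in simp)
    also have "\<dots> = 1 / n" using m by simp
    finally show ?thesis .
  qed
  have "(F ^^ (m * n)) 0 / (real m * real n) = (F ^^ (n * m)) 0 / (real n * real m)"
    by (simp add: mult.commute)
  then show ?thesis using e1 e2 unfolding abs_le_iff by linarith
qed

lemma rot_conv: assumes "circle_lift F"
  shows "(\<lambda>n. (F ^^ n) 0 / real n) \<longlonglongrightarrow> rot_num F"
    and "\<And>m. m \<ge> 1 \<Longrightarrow> \<bar>rot_num F - (F ^^ m) 0 / m\<bar> \<le> 1 / m"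
proof -
  let ?X = "\<lambda>n. (F ^^ n) 0 / real n"
  have "Cauchy ?X"
  proof (rule metric_CauchyI)
    fix e :: real assume e: "e > 0"
    obtain M :: nat where M: "M > 2 / e" using reals_Archimedean2 by blast
    have "2 / e > 0" using e by simp
    then have "real M > 0" using M by linarith
    then have Mpos: "M \<ge> 1" by simp
    show "\<exists>M. \<forall>m\<ge>M. \<forall>n\<ge>M. dist (?X m) (?X n) < e"
    proof (intro exI allI impI)
      fix m n assume mn: "M \<le> m" "M \<le> n"
      have "dist (?X m) (?X n) \<le> 1 / m + 1 / n"
        unfolding dist_real_def using a_cmp[OF assms, of m n] mn Mpos by simp
      also have "1 / real m \<le> 1 / M" using mn Mpos by (simp add: frac_le)
      also have "1 / real n \<le> 1 / M" using mn Mpos by (simp add: frac_le)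
      also have "1 / real M + 1 / M < e" using M e Mpos by (simp add: field_simps)
      finally show "dist (?X m) (?X n) < e" by simp
    qed
  qed
  then have conv: "convergent ?X" using Cauchy_convergent_iff by blast
  then show lim: "?X \<longlonglongrightarrow> rot_num F" unfolding rot_num_def using convergent_LIMSEQ_iff by blast
  fix m :: nat assume m: "m \<ge> 1"
  have "\<bar>rot_num F - ?X m\<bar> \<le> 1 / m + 0"
  proof (rule tendsto_le[OF trivial_limit_sequentially])
    show "(\<lambda>n. \<bar>?X n - ?X m\<bar>) \<longlonglongrightarrow> \<bar>rot_num F - ?X m\<bar>"
      by (intro tendsto_intros lim)
    show "(\<lambda>n. 1 / real m + 1 / real n) \<longlonglongrightarrow> 1 / m + 0"
      by (intro tendsto_intros lim_1_over_n)
    show "\<forall>\<^sub>F n in sequentially. \<bar>?X n - ?X m\<bar> \<le> 1 / real m + 1 / real n"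
      using eventually_ge_at_top[of 1] 
      by eventually_elim (use a_cmp[OF assms m] in \<open>simp add: abs_minus_commute\<close>)
  qed
  then show "\<bar>rot_num F - (F ^^ m) 0 / m\<bar> \<le> 1 / m" by simp
qed



lemma iter_lb: assumes "circle_lift F" "\<forall>x. (F ^^ q) x \<ge> x + c"
  shows "(F ^^ (q * k)) 0 \<ge> real k * c"
proof (induction k)
  case 0 then show ?case by simp
next
  case (Suc k)
  have "(F ^^ (q * Suc k)) 0 = (F ^^ q) ((F ^^ (q * k)) 0)" by (simp add: funpow_add)
  then show ?case using Suc assms(2)[rule_format, of "(F ^^ (q * k)) 0"] by (simp add: algebra_simps)
qed

lemma iter_ub: assumes "circle_lift F" "\<forall>x. (F ^^ q) x \<le> x + c"
  shows "(F ^^ (q * k)) 0 \<le> real k * c"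
proof (induction k)
  case 0 then show ?case by simp
next
  case (Suc k)
  have "(F ^^ (q * Suc k)) 0 = (F ^^ q) ((F ^^ (q * k)) 0)" by (simp add: funpow_add)
  then show ?case using Suc assms(2)[rule_format, of "(F ^^ (q * k)) 0"] by (simp add: algebra_simps)
qed

lemma D_per: assumes "circle_lift G" shows "G x - x = G (x - of_int \<lfloor>x\<rfloor>) - (x - of_int \<lfloor>x\<rfloor>)"
  using cl_int[OF assms, of "x - of_int \<lfloor>x\<rfloor>" "\<lfloor>x\<rfloor>"] by simp

lemma unif_pos: assumes "circle_lift G" "\<forall>x. G x > x" shows "\<exists>d>0. \<forall>x. G x \<ge> x + d"
proof -
  have "continuous_on {0..1} (\<lambda>x. G x - x)"
    by (intro continuous_intros cl_cont_on[OF assms(1)])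
  then obtain x1 where x1: "x1 \<in> {0..1}" "\<forall>y\<in>{0..1}. G x1 - x1 \<le> G y - y"
    using continuous_attains_inf[of "{0..1::real}" "\<lambda>x. G x - x"] by auto
  show ?thesis
  proof (intro exI conjI allI)
    show "G x1 - x1 > 0" using assms(2) by simp
    fix x :: real
    have "x - of_int \<lfloor>x\<rfloor> \<in> {0..1}" by (auto simp: frac_def[symmetric] less_imp_le frac_lt_1)
    then have "G x1 - x1 \<le> G (x - of_int \<lfloor>x\<rfloor>) - (x - of_int \<lfloor>x\<rfloor>)" using x1(2) by blast
    then show "G x \<ge> x + (G x1 - x1)" using D_per[OF assms(1), of x] by linarith
  qed
qed

lemma unif_neg: assumes "circle_lift G" "\<forall>x. G x < x" shows "\<exists>d>0. \<forall>x. G x \<le> x - d"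
proof -
  have "continuous_on {0..1} (\<lambda>x. G x - x)"
    by (intro continuous_intros cl_cont_on[OF assms(1)])
  then obtain x1 where x1: "x1 \<in> {0..1}" "\<forall>y\<in>{0..1}. G y - y \<le> G x1 - x1"
    using continuous_attains_sup[of "{0..1::real}" "\<lambda>x. G x - x"] by auto
  show ?thesis
  proof (intro exI conjI allI)
    show "x1 - G x1 > 0" using assms(2) by simp
    fix x :: real
    have "x - of_int \<lfloor>x\<rfloor> \<in> {0..1}" by (auto simp: frac_def[symmetric] less_imp_le frac_lt_1)
    then have "G (x - of_int \<lfloor>x\<rfloor>) - (x - of_int \<lfloor>x\<rfloor>) \<le> G x1 - x1" using x1(2) by blast
    then show "G x \<le> x - (x1 - G x1)" using D_per[OF assms(1), of x] by linarith
  qed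
qed

lemma fix_exists:
  assumes F: "circle_lift F" and q: "q > 0" and rho: "rot_num F = of_int p / real q"
  shows "\<exists>x. (F ^^ q) x - of_int p = x"
proof -
  define G where "G = (\<lambda>x. (F ^^ q) x - of_int p)"
  have G: "circle_lift G" unfolding G_def using cl_shift[OF cl_pow[OF F, of q], of "of_int p"] by simp
  have qr: "real q > 0" using q by simp
  have le: "\<exists>x. G x \<le> x"
  proof (rule ccontr)
    assume nex: "\<not> (\<exists>x. G x \<le> x)"
    have "\<forall>x. G x > x"
    proof
      fix x show "G x > x"
      proof (rule ccontr)
        assume "\<not> G x > x" then have "G x \<le> x" by linarith
        then show False using nex by blast
      qed
    qed
    then obtain d where d: "d > 0" "\<forall>x. G x \<ge> x + d" using unif_pos[OF G] by blast
    obtain k :: nat where k: "k > 1 / d" using reals_Archimedean2 by blast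
    have kd: "1 < real k * d" using k d by (simp add: pos_divide_less_eq)
    have "1 / d > 0" using d by simp
    then have kpos: "real k > 0" using k by linarith
    have k1: "k \<ge> 1" using kpos by simp
    have "\<forall>x. (F ^^ q) x \<ge> x + (of_int p + d)" using d(2) unfolding G_def by (auto simp: algebra_simps)
    from iter_lb[OF F this, of k] have A: "(F ^^ (q * k)) 0 \<ge> real k * (of_int p + d)" .
    have B: "\<bar>rot_num F - (F ^^ (q * k)) 0 / real (q * k)\<bar> \<le> 1 / real (q * k)"
      using rot_conv(2)[OF F, of "q * k"] q k1 by simp
    have qk: "real (q * k) > 0" using q k1 by simp
    have "(F ^^ (q * k)) 0 / real (q * k) \<ge> real k * (of_int p + d) / real (q * k)"
      by (rule divide_right_mono[OF A]) (use qk in simp)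
    also have "real k * (of_int p + d) / real (q * k) = (of_int p + d) / real q" using kpos by simp
    finally have "of_int p / real q \<ge> (of_int p + d) / real q - 1 / real (q * k)" using B rho by linarith
    moreover have "(of_int p + d) / real q = of_int p / real q + d / real q" by (simp add: add_divide_distrib)
    moreover have "1 / real (q * k) = (1 / real k) / real q" by simp
    ultimately have "d / real q \<le> (1 / real k) / real q" by linarith
    then have "d \<le> 1 / real k" using qr by (simp only: divide_le_cancel)
    then have "d * real k \<le> 1" using kpos by (simp add: pos_le_divide_eq)
    then show False using kd by (simp add: mult.commute)
  qed
  have ge: "\<exists>x. G x \<ge> x"
  proof (rule ccontr)
    assume nex: "\<not> (\<exists>x. G x \<ge> x)"
    have "\<forall>x. G x < x"
    proof
      fix x show "G x < x"
      proof (rule ccontr)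
        assume "\<not> G x < x" then have "G x \<ge> x" by linarith
        then show False using nex by blast
      qed
    qed
    then obtain d where d: "d > 0" "\<forall>x. G x \<le> x - d" using unif_neg[OF G] by blast
    obtain k :: nat where k: "k > 1 / d" using reals_Archimedean2 by blast
    have kd: "1 < real k * d" using k d by (simp add: pos_divide_less_eq)
    have "1 / d > 0" using d by simp
    then have kpos: "real k > 0" using k by linarith
    have k1: "k \<ge> 1" using kpos by simp
    have "\<forall>x. (F ^^ q) x \<le> x + (of_int p - d)" using d(2) unfolding G_def by (auto simp: algebra_simps)
    from iter_ub[OF F this, of k] have A: "(F ^^ (q * k)) 0 \<le> real k * (of_int p - d)" .
    have B: "\<bar>rot_num F - (F ^^ (q * k)) 0 / real (q * k)\<bar> \<le> 1 / real (q * k)"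
      using rot_conv(2)[OF F, of "q * k"] q k1 by simp
    have qk: "real (q * k) > 0" using q k1 by simp
    have "(F ^^ (q * k)) 0 / real (q * k) \<le> real k * (of_int p - d) / real (q * k)"
      by (rule divide_right_mono[OF A]) (use qk in simp)
    also have "real k * (of_int p - d) / real (q * k) = (of_int p - d) / real q" using kpos by simp
    finally have "of_int p / real q \<le> (of_int p - d) / real q + 1 / real (q * k)" using B rho by linarith
    moreover have "(of_int p - d) / real q = of_int p / real q - d / real q" by (simp add: diff_divide_distrib)
    moreover have "1 / real (q * k) = (1 / real k) / real q" by simp
    ultimately have "d / real q \<le> (1 / real k) / real q" by linarith
    then have "d \<le> 1 / real k" using qr by (simp only: divide_le_cancel)
    then have "d * real k \<le> 1" using kpos by (simp add: pos_le_divide_eq)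
    then show False using kd by (simp add: mult.commute)
  qed
  obtain x1 where x1: "G x1 \<le> x1" using le by blast
  obtain x2 where x2: "G x2 \<ge> x2" using ge by blast
  have cD: "\<And>a b. continuous_on {a..b} (\<lambda>x. G x - x)"
    by (intro continuous_intros cl_cont_on[OF G])
  have "\<exists>x. G x - x = 0"
  proof (cases "x1 \<le> x2")
    case True
    have "\<exists>x. x1 \<le> x \<and> x \<le> x2 \<and> G x - x = 0"
      by (rule IVT'[where f="\<lambda>x. G x - x" and a=x1 and b=x2 and y=0]) (use x1 x2 True cD in auto)
    then show ?thesis by blast
  next
    case False
    then have "x2 \<le> x1" by simp
    have "\<exists>x. x2 \<le> x \<and> x \<le> x1 \<and> G x - x = 0"
      by (rule IVT2'[where f="\<lambda>x. G x - x" and a=x2 and b=x1 and y=0]) (use x1 x2 \<open>x2 \<le> x1\<close> cD in auto)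
    then show ?thesis by blast
  qed
  then show ?thesis unfolding G_def by auto
qed



lemma bowen_set: "{circ_dist ((circ_map F ^^ k) x) ((circ_map F ^^ k) y) | k. k < n}
   = (\<lambda>k. circ_dist ((circ_map F ^^ k) x) ((circ_map F ^^ k) y)) ` {..<n}"
  by auto

lemma bowen_lt: assumes "n \<ge> 1" "\<And>k. k < n \<Longrightarrow> circ_dist ((circ_map F ^^ k) x) ((circ_map F ^^ k) y) < e"
  shows "bowen_dist F n x y < e"
proof -
  have "0 \<in> {..<n}" using assms(1) by simp
  then have ne: "{..<n} \<noteq> {}" by blast
  show ?thesis unfolding bowen_dist_def bowen_set
    using assms(2) ne by (subst Max_less_iff) auto
qed

lemma bowen_ge: assumes "k < n"
  shows "circ_dist ((circ_map F ^^ k) x) ((circ_map F ^^ k) y) \<le> bowen_dist F n x y"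
  unfolding bowen_dist_def bowen_set using assms by (intro Max_ge) auto

lemma cover_le: assumes "finite C" "C \<subseteq> circle" "\<forall>x\<in>circle. \<exists>c\<in>C. bowen_dist F n x c < eps"
  shows "cover_num F n eps \<le> card C"
  unfolding cover_num_def by (rule cInf_lower) (use assms in auto)

lemma grid_card: fixes N :: nat and A :: real assumes "N \<ge> 1"
  shows "finite {j::int. A \<le> of_int j / N \<and> of_int j / N < A + 1}"
    "card {j::int. A \<le> of_int j / N \<and> of_int j / N < A + 1} \<le> N"
proof -
  have Np: "real N > 0" using assms by simp
  have sub: "{j::int. A \<le> of_int j / N \<and> of_int j / N < A + 1} \<subseteq> {\<lceil>A * N\<rceil> ..< \<lceil>A * N\<rceil> + int N}"
  proof
    fix j assume "j \<in> {j::int. A \<le> of_int j / N \<and> of_int j / N < A + 1}"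
    then have j: "A * N \<le> of_int j" "of_int j < A * N + N" using Np by (auto simp: field_simps)
    have "\<lceil>A * N\<rceil> \<le> j" using j(1) by (simp add: ceiling_le_iff)
    moreover have "of_int j < of_int \<lceil>A * N\<rceil> + real N" using j(2) le_of_int_ceiling[of "A * N"] by linarith
    then have "j < \<lceil>A * N\<rceil> + int N" by linarith
    ultimately show "j \<in> {\<lceil>A * N\<rceil> ..< \<lceil>A * N\<rceil> + int N}" by simp
  qed
  show "finite {j::int. A \<le> of_int j / N \<and> of_int j / N < A + 1}" by (rule finite_subset[OF sub]) simp
  have "card {j::int. A \<le> of_int j / N \<and> of_int j / N < A + 1} \<le> card {\<lceil>A * N\<rceil> ..< \<lceil>A * N\<rceil> + int N}"
    by (rule card_mono[OF _ sub]) simp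
  then show "card {j::int. A \<le> of_int j / N \<and> of_int j / N < A + 1} \<le> N" by simp
qed

lemma Sk_card: assumes F: "circle_lift F" and N: "N \<ge> 1"
  shows "finite {x \<in> {0..<1}. \<exists>j::int. (F ^^ k) x = of_int j / real N}"
    "card {x \<in> {0..<1}. \<exists>j::int. (F ^^ k) x = of_int j / real N} \<le> N"
proof -
  let ?S = "{x \<in> {0..<1}. \<exists>j::int. (F ^^ k) x = of_int j / real N}"
  let ?J = "{j::int. (F ^^ k) 0 \<le> of_int j / N \<and> of_int j / N < (F ^^ k) 0 + 1}"
  have Fk: "circle_lift (F ^^ k)" by (rule cl_pow[OF F])
  have Np: "real N > 0" using N by simp
  define phi where "phi x = \<lfloor>real N * (F ^^ k) x\<rfloor>" for x
  have phi: "(F ^^ k) x = of_int (phi x) / N" if xS: "x \<in> ?S" for x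
  proof -
    obtain j where j: "(F ^^ k) x = of_int j / real N" using xS by auto
    then have "real N * (F ^^ k) x = of_int j" using Np by simp
    then show ?thesis unfolding phi_def using j by simp
  qed
  have inj: "inj_on phi ?S"
  proof
    fix x y assume xy: "x \<in> ?S" "y \<in> ?S" "phi x = phi y"
    have "(F ^^ k) x = (F ^^ k) y" by (simp only: phi[OF xy(1)] phi[OF xy(2)] xy(3))
    then show "x = y" using cl_mono[OF Fk] by (simp add: strict_mono_eq)
  qed
  have img: "phi ` ?S \<subseteq> ?J"
  proof
    fix j assume "j \<in> phi ` ?S"
    then obtain x where x: "x \<in> ?S" "j = phi x" by auto
    have "(F ^^ k) 0 \<le> (F ^^ k) x" using x(1) cl_mono_le[OF Fk] by auto
    moreover have "(F ^^ k) x < (F ^^ k) 1" using x(1) cl_less_iff[OF Fk] by auto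
    moreover have "(F ^^ k) 1 = (F ^^ k) 0 + 1" using cl_per[OF Fk, of 0] by simp
    ultimately show "j \<in> ?J" using phi[OF x(1)] x(2) by simp
  qed
  have fJ: "finite ?J" using grid_card(1)[OF N] .
  show "finite ?S" by (rule finite_imageD[OF finite_subset[OF img fJ] inj])
  have "card ?S = card (phi ` ?S)" using card_image[OF inj] by simp
  also have "\<dots> \<le> card ?J" by (rule card_mono[OF fJ img])
  also have "\<dots> \<le> N" using grid_card(2)[OF N] .
  finally show "card ?S \<le> N" .
qed

lemma upper_bound: assumes F: "circle_lift F" and e: "eps > 0"
  shows "\<exists>N::nat. N \<ge> 1 \<and> (\<forall>n\<ge>1. cover_num F n eps \<le> n * N + 1 \<and>
     (\<exists>C. finite C \<and> C \<subseteq> circle \<and> (\<forall>x\<in>circle. \<exists>c\<in>C. bowen_dist F n x c < eps)))"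
proof -
  define N :: nat where "N = nat \<lceil>1 / eps\<rceil> + 1"
  have N1: "N \<ge> 1" unfolding N_def by simp
  have "real N > 1 / eps" unfolding N_def by linarith
  then have Neps: "1 / real N < eps" using e N1 by (simp add: field_simps)
  have Np: "real N > 0" using N1 by simp
  show ?thesis
  proof (rule exI[of _ N], rule conjI[OF N1], intro allI impI)
    fix n :: nat assume n: "n \<ge> 1"
    show "cover_num F n eps \<le> n * N + 1 \<and>
     (\<exists>C. finite C \<and> C \<subseteq> circle \<and> (\<forall>x\<in>circle. \<exists>c\<in>C. bowen_dist F n x c < eps))"
    proof -
    define Sk where "Sk k = {x \<in> {0..<1}. \<exists>j::int. (F ^^ k) x = of_int j / real N}" for k
    define S where "S = insert 0 (\<Union>k<n. Sk k)"
    have fSk: "finite (Sk k)" "card (Sk k) \<le> N" for k unfolding Sk_def using Sk_card[OF F N1] by auto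
    have fS: "finite S" unfolding S_def using fSk by auto
    have SC: "S \<subseteq> circle" unfolding S_def Sk_def circle_def by auto
    have fU: "finite (\<Union>k<n. Sk k)" using fSk by auto
    have cS: "card S \<le> card (\<Union>k<n. Sk k) + 1" unfolding S_def using fU by (simp add: card_insert_if)
    have "card (\<Union>k<n. Sk k) \<le> (\<Sum>k<n. card (Sk k))" by (rule card_UN_le) simp
    also have "\<dots> \<le> (\<Sum>k<n. N)" by (rule sum_mono) (use fSk in auto)
    also have "\<dots> = n * N" by simp
    finally have cardS: "card S \<le> n * N + 1" using cS by linarith
    have cov: "\<forall>x\<in>circle. \<exists>c\<in>S. bowen_dist F n x c < eps"
    proof
      fix x assume x: "x \<in> circle"
      then have x01: "0 \<le> x" "x < 1" unfolding circle_def by auto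
      define T where "T = {t \<in> S. t \<le> x}"
      have fT: "finite T" unfolding T_def using fS by simp
      have T0: "0 \<in> T" unfolding T_def S_def using x01 by simp
      define s where "s = Max T"
      have sT: "s \<in> T" unfolding s_def using fT T0 by (intro Max_in) auto
      have sx: "s \<le> x" and sS: "s \<in> S" using sT unfolding T_def by auto
      have s0: "0 \<le> s" using sS SC unfolding circle_def by auto
      have maxT: "t \<le> s" if "t \<in> T" for t unfolding s_def using fT that by simp
      have close: "(F ^^ k) x - (F ^^ k) s < 1 / real N" if k: "k < n" for k
      proof (rule ccontr)
        assume "\<not> ?thesis"
        then have ge: "(F ^^ k) x - (F ^^ k) s \<ge> 1 / real N" by simp
        have Fk: "circle_lift (F ^^ k)" by (rule cl_pow[OF F])
        define j where "j = \<lfloor>real N * (F ^^ k) x\<rfloor>"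
        define g where "g = of_int j / real N"
        have "of_int j \<le> real N * (F ^^ k) x" "real N * (F ^^ k) x < of_int j + 1" unfolding j_def by linarith+
        then have g1: "g \<le> (F ^^ k) x" and g2: "(F ^^ k) x < g + 1 / real N"
          unfolding g_def using Np by (simp_all add: field_simps)
        have g3: "(F ^^ k) s < g" using g2 ge by linarith
        obtain t where t: "s \<le> t" "t \<le> x" "(F ^^ k) t = g"
          using IVT'[of "F ^^ k" s g x, OF _ g1 sx cl_cont_on[OF Fk]] g3 by auto
        have "t \<in> Sk k" unfolding Sk_def using t s0 x01 g_def by auto
        then have "t \<in> S" unfolding S_def using k by auto
        then have "t \<in> T" unfolding T_def using t by simp
        then have "t \<le> s" by (rule maxT)
        then have "t = s" using t by simp
        then show False using t(3) g3 by simp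
      qed
      have "bowen_dist F n x s < eps"
      proof (rule bowen_lt[OF n])
        fix k assume k: "k < n"
        have Fk: "circle_lift (F ^^ k)" by (rule cl_pow[OF F])
        have xf: "frac x = x" and sf: "frac s = s" using x01 s0 sS SC unfolding circle_def by (auto simp: frac_eq)
        have "circ_dist ((circ_map F ^^ k) x) ((circ_map F ^^ k) s)
            = circ_dist (frac ((F ^^ k) x)) (frac ((F ^^ k) s))"
          using cm_pow[OF F, of k x] cm_pow[OF F, of k s] xf sf by simp
        also have "\<dots> = circ_dist ((F ^^ k) x) ((F ^^ k) s)" by (rule cd_frac)
        also have "\<dots> \<le> \<bar>(F ^^ k) x - (F ^^ k) s\<bar>" by (rule cd_le0)
        also have "\<dots> < 1 / real N" using close[OF k] cl_mono_le[OF Fk sx] by simp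
        finally show "circ_dist ((circ_map F ^^ k) x) ((circ_map F ^^ k) s) < eps" using Neps by simp
      qed
      then show "\<exists>c\<in>S. bowen_dist F n x c < eps" using sS by blast
    qed
    have "cover_num F n eps \<le> card S" by (rule cover_le[OF fS SC cov])
    then show ?thesis using cardS fS SC cov by auto
    qed
  qed
qed



lemma cover_ge:
  assumes ne: "\<exists>C. finite C \<and> C \<subseteq> circle \<and> (\<forall>x\<in>circle. \<exists>c\<in>C. bowen_dist F n x c < eps)"
    and pts: "\<And>i. i < m \<Longrightarrow> v i \<in> circle"
    and sep: "\<And>i j. i < m \<Longrightarrow> j < m \<Longrightarrow> i \<noteq> j \<Longrightarrow>
        \<exists>k<n. 2 * eps \<le> circ_dist ((circ_map F ^^ k) (v i)) ((circ_map F ^^ k) (v j))"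
  shows "m \<le> cover_num F n eps"
  unfolding cover_num_def
proof (rule cInf_greatest)
  show "{card C |C. finite C \<and> C \<subseteq> circle \<and> (\<forall>x\<in>circle. \<exists>c\<in>C. bowen_dist F n x c < eps)} \<noteq> {}"
    using ne by blast
  fix z assume "z \<in> {card C |C. finite C \<and> C \<subseteq> circle \<and> (\<forall>x\<in>circle. \<exists>c\<in>C. bowen_dist F n x c < eps)}"
  then obtain C where C: "z = card C" "finite C" "C \<subseteq> circle" "\<forall>x\<in>circle. \<exists>c\<in>C. bowen_dist F n x c < eps"
    by blast
  have "\<forall>i\<in>{..<m}. \<exists>c. c \<in> C \<and> bowen_dist F n (v i) c < eps" using C(4) pts by blast
  then obtain g where g: "\<forall>i\<in>{..<m}. g i \<in> C \<and> bowen_dist F n (v i) (g i) < eps"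
    using bchoice[of "{..<m}" "\<lambda>i c. c \<in> C \<and> bowen_dist F n (v i) c < eps"] by blast
  have inj: "inj_on g {..<m}"
  proof
    fix i j assume ij: "i \<in> {..<m}" "j \<in> {..<m}" "g i = g j"
    show "i = j"
    proof (rule ccontr)
      assume "i \<noteq> j"
      then obtain k where k: "k < n" "2 * eps \<le> circ_dist ((circ_map F ^^ k) (v i)) ((circ_map F ^^ k) (v j))"
        using sep ij by auto
      have 1: "circ_dist ((circ_map F ^^ k) (v i)) ((circ_map F ^^ k) (g i)) < eps"
        using bowen_ge[OF k(1), of F "v i" "g i"] g ij by force
      have 2: "circ_dist ((circ_map F ^^ k) (v j)) ((circ_map F ^^ k) (g i)) < eps"
        using bowen_ge[OF k(1), of F "v j" "g j"] g ij by force
      have "circ_dist ((circ_map F ^^ k) (v i)) ((circ_map F ^^ k) (v j))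
          \<le> circ_dist ((circ_map F ^^ k) (v i)) ((circ_map F ^^ k) (g i))
           + circ_dist ((circ_map F ^^ k) (g i)) ((circ_map F ^^ k) (v j))" by (rule cd_tri)
      then show False using 1 2 k(2) cd_sym[of "(circ_map F ^^ k) (g i)" "(circ_map F ^^ k) (v j)"] by linarith
    qed
  qed
  have "card {..<m} \<le> card C" by (rule card_inj_on_le[OF inj _ C(2)]) (use g in auto)
  then show "m \<le> z" using C(1) by simp
qed

lemma FG_iter: assumes F: "circle_lift F"
  shows "(F ^^ (q * i)) x = ((\<lambda>x. (F ^^ q) x - of_int p) ^^ i) x + of_int (int i * p)"
proof (induction i)
  case 0 then show ?case by simp
next
  case (Suc i)
  have "(F ^^ (q * Suc i)) x = (F ^^ q) ((F ^^ (q * i)) x)" by (simp add: funpow_add)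
  also have "\<dots> = (F ^^ q) (((\<lambda>x. (F ^^ q) x - of_int p) ^^ i) x) + of_int (int i * p)"
    unfolding Suc by (rule cl_int[OF cl_pow[OF F]])
  finally show ?case by (simp add: algebra_simps)
qed

lemma sep_core:
  assumes F: "circle_lift F" and q: "q > 0" and sig: "\<sigma> > 0"
    and sepu: "\<And>i j. i < j \<Longrightarrow> \<sigma> \<le> circ_dist (((\<lambda>x. (F ^^ q) x - of_int p) ^^ i) (u i))
                                         (((\<lambda>x. (F ^^ q) x - of_int p) ^^ i) (u j))"
    and e: "eps > 0" "2 * eps \<le> \<sigma>" and n: "n \<ge> 1"
  shows "(n - 1) div q + 1 \<le> cover_num F n eps"
proof -
  let ?G = "\<lambda>x. (F ^^ q) x - of_int p"
  define m where "m = (n - 1) div q + 1"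
  obtain N where "\<forall>n\<ge>1. cover_num F n eps \<le> n * N + 1 \<and>
     (\<exists>C. finite C \<and> C \<subseteq> circle \<and> (\<forall>x\<in>circle. \<exists>c\<in>C. bowen_dist F n x c < eps))"
    using upper_bound[OF F e(1)] by blast
  then have ne: "\<exists>C. finite C \<and> C \<subseteq> circle \<and> (\<forall>x\<in>circle. \<exists>c\<in>C. bowen_dist F n x c < eps)"
    using n by blast
  have time: "q * i < n" if "i < m" for i
  proof -
    have "i \<le> (n - 1) div q" using that unfolding m_def by simp
    then have "q * i \<le> q * ((n - 1) div q)" by simp
    also have "\<dots> \<le> n - 1" by simp
    finally show ?thesis using n by simp
  qed
  have dist_eq: "circ_dist ((circ_map F ^^ (q * i)) (frac (u i))) ((circ_map F ^^ (q * i)) (frac (u j)))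
      = circ_dist ((?G ^^ i) (u i)) ((?G ^^ i) (u j))" for i j
  proof -
    have "circ_dist ((circ_map F ^^ (q * i)) (frac (u i))) ((circ_map F ^^ (q * i)) (frac (u j)))
        = circ_dist ((F ^^ (q * i)) (u i)) ((F ^^ (q * i)) (u j))"
      by (simp only: cm_pow[OF F] cd_frac)
    also have "\<dots> = circ_dist ((?G ^^ i) (u i) + of_int (int i * p)) ((?G ^^ i) (u j) + of_int (int i * p))"
      by (simp only: FG_iter[OF F, of q i _ p])
    also have "\<dots> = circ_dist ((?G ^^ i) (u i)) ((?G ^^ i) (u j))"
      by (simp only: cd_int cd_int2)
    finally show ?thesis .
  qed
  have "m \<le> cover_num F n eps"
  proof (rule cover_ge[OF ne])
    fix i assume "i < m"
    show "frac (u i) \<in> circle" unfolding circle_def by (simp add: frac_lt_1)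
  next
    fix i j assume ij: "i < m" "j < m" "i \<noteq> j"
    show "\<exists>k<n. 2 * eps \<le> circ_dist ((circ_map F ^^ k) (frac (u i))) ((circ_map F ^^ k) (frac (u j)))"
    proof (cases "i < j")
      case True
      show ?thesis
        using time[OF ij(1)] dist_eq[of i j] sepu[OF True] e(2) by auto
    next
      case False
      then have "j < i" using ij(3) by simp
      then show ?thesis
        using time[OF ij(2)] dist_eq[of j i] sepu[of j i] e(2) cd_sym by fastforce
    qed
  qed
  then show ?thesis unfolding m_def .
qed



lemma iter_fix: "G a = a \<Longrightarrow> (G ^^ i) a = a"
  by (induction i) auto

lemma sep_up_gen:
  assumes G: "circle_lift G" and Ga: "G a = a" and ac: "a < c" "c < a + 1" and Gc: "G c > c"
  shows "\<exists>\<sigma>>0. \<exists>u. \<forall>i j. i < j \<longrightarrow> \<sigma> \<le> circ_dist ((G ^^ i) (u i)) ((G ^^ i) (u j))"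
proof -
  have Gi: "circle_lift (G ^^ i)" for i by (rule cl_pow[OF G])
  have fixa: "(G ^^ i) a = a" for i using iter_fix[of G a i] Ga by simp
  have cge: "(G ^^ i) c \<ge> c" for i
  proof (induction i)
    case 0 then show ?case by simp
  next
    case (Suc i)
    have "G c \<le> G ((G ^^ i) c)" by (rule cl_mono_le[OF G Suc])
    then show ?case using Gc by simp
  qed
  have "\<forall>i. \<exists>x. a \<le> x \<and> x \<le> c \<and> (G ^^ i) x = c"
  proof
    fix i
    show "\<exists>x. a \<le> x \<and> x \<le> c \<and> (G ^^ i) x = c"
      by (rule IVT'[where f="G ^^ i" and a=a and b=c and y=c]) (use fixa cge ac cl_cont_on[OF Gi] in auto)
  qed
  then obtain u where u: "\<And>i. a \<le> u i" "\<And>i. u i \<le> c" "\<And>i. (G ^^ i) (u i) = c"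
    by metis
  obtain w where w: "a \<le> w" "w \<le> c" "G w = c"
    using IVT'[where f=G and a=a and b=c and y=c] Ga Gc ac cl_cont_on[OF G] by auto
  have wc: "w < c"
  proof (rule ccontr)
    assume "\<not> w < c" then have "c \<le> w" by simp
    then have "G c \<le> G w" by (rule cl_mono_le[OF G])
    then show False using w Gc by simp
  qed
  define \<sigma> where "\<sigma> = min (c - w) (1 - (c - a))"
  have sp: "\<sigma> > 0" unfolding \<sigma>_def using wc ac by simp
  have key: "\<sigma> \<le> circ_dist ((G ^^ i) (u i)) ((G ^^ i) (u j))" if ij: "i < j" for i j
  proof -
    define y where "y = (G ^^ i) (u j)"
    define d where "d = j - i - 1"
    have jd: "j = Suc d + i" unfolding d_def using ij by simp
    have "(G ^^ j) (u j) = (G ^^ d) (G y)" unfolding y_def jd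
      by (simp only: funpow_add funpow_Suc_right comp_def)
    then have yc: "(G ^^ d) (G y) = c" using u(3) by simp
    have Gy: "G y \<le> c"
    proof (rule ccontr)
      assume "\<not> G y \<le> c" then have "c < G y" by simp
      then have "(G ^^ d) c < (G ^^ d) (G y)" using cl_less_iff[OF Gi] by blast
      then show False using yc cge[of d] by simp
    qed
    have yw: "y \<le> w" using Gy w(3) cl_le_iff[OF G, of y w] by simp
    have ya: "a \<le> y" unfolding y_def using cl_mono_le[OF Gi u(1)[of j]] fixa by simp
    have "min (c - w) (1 - (c - a)) \<le> circ_dist c y"
      by (rule cd_lower) (use yw ya wc ac in auto)
    then show ?thesis unfolding \<sigma>_def y_def using u(3) by simp
  qed
  show ?thesis using sp key by blast
qed

lemma sep_down_gen:
  assumes G: "circle_lift G" and Ga: "G a = a" and ac: "c < a" "a < c + 1" and Gc: "G c < c"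
  shows "\<exists>\<sigma>>0. \<exists>u. \<forall>i j. i < j \<longrightarrow> \<sigma> \<le> circ_dist ((G ^^ i) (u i)) ((G ^^ i) (u j))"
proof -
  have Gi: "circle_lift (G ^^ i)" for i by (rule cl_pow[OF G])
  have fixa: "(G ^^ i) a = a" for i using iter_fix[of G a i] Ga by simp
  have cle: "(G ^^ i) c \<le> c" for i
  proof (induction i)
    case 0 then show ?case by simp
  next
    case (Suc i)
    have "G ((G ^^ i) c) \<le> G c" by (rule cl_mono_le[OF G Suc])
    then show ?case using Gc by simp
  qed
  have "\<forall>i. \<exists>x. c \<le> x \<and> x \<le> a \<and> (G ^^ i) x = c"
  proof
    fix i
    show "\<exists>x. c \<le> x \<and> x \<le> a \<and> (G ^^ i) x = c"
      by (rule IVT'[where f="G ^^ i" and a=c and b=a and y=c]) (use fixa cle ac cl_cont_on[OF Gi] in auto)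
  qed
  then obtain u where u: "\<And>i. c \<le> u i" "\<And>i. u i \<le> a" "\<And>i. (G ^^ i) (u i) = c"
    by metis
  obtain w where w: "c \<le> w" "w \<le> a" "G w = c"
    using IVT'[where f=G and a=c and b=a and y=c] Ga Gc ac cl_cont_on[OF G] by auto
  have wc: "c < w"
  proof (rule ccontr)
    assume "\<not> c < w" then have "w \<le> c" by simp
    then have "G w \<le> G c" by (rule cl_mono_le[OF G])
    then show False using w Gc by simp
  qed
  define \<sigma> where "\<sigma> = min (w - c) (1 - (a - c))"
  have sp: "\<sigma> > 0" unfolding \<sigma>_def using wc ac by simp
  have key: "\<sigma> \<le> circ_dist ((G ^^ i) (u i)) ((G ^^ i) (u j))" if ij: "i < j" for i j
  proof -
    define y where "y = (G ^^ i) (u j)"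
    define d where "d = j - i - 1"
    have jd: "j = Suc d + i" unfolding d_def using ij by simp
    have "(G ^^ j) (u j) = (G ^^ d) (G y)" unfolding y_def jd
      by (simp only: funpow_add funpow_Suc_right comp_def)
    then have yc: "(G ^^ d) (G y) = c" using u(3) by simp
    have Gy: "c \<le> G y"
    proof (rule ccontr)
      assume "\<not> c \<le> G y" then have "G y < c" by simp
      then have "(G ^^ d) (G y) < (G ^^ d) c" using cl_less_iff[OF Gi] by blast
      then show False using yc cle[of d] by simp
    qed
    have yw: "w \<le> y" using Gy w(3) cl_le_iff[OF G, of w y] by simp
    have ya: "y \<le> a" unfolding y_def using cl_mono_le[OF Gi u(2)[of j]] fixa by simp
    have "min (w - c) (1 - (a - c)) \<le> circ_dist y c"
      by (rule cd_lower) (use yw ya wc ac in auto)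
    then show ?thesis unfolding \<sigma>_def y_def using u(3) cd_sym by metis
  qed
  show ?thesis using sp key by blast
qed



lemma per_int: fixes K :: "real \<Rightarrow> real" assumes P: "\<And>x. K (x + 1) = K x + 1" shows "K (x + of_int m) = K x + of_int m"
proof (induction m arbitrary: x rule: int_induct[where k=0])
  case base then show ?case by simp
next
  case (step1 i) then show ?case using P[of "x + of_int i"] by (simp add: add.assoc)
next
  case (step2 i)
  have "K (x + of_int (i - 1)) + 1 = K (x + of_int i)"
    using P[of "x + of_int (i - 1)"] by (simp add: add.assoc)
  then show ?case using step2 by simp
qed

lemma frac_K_frac: fixes K :: "real \<Rightarrow> real" assumes P: "\<And>x. K (x + 1) = K x + 1" shows "frac (K (frac y)) = frac (K y)"
proof -
  have "K (frac y) = K y + of_int (- \<lfloor>y\<rfloor>)"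
    using per_int[where K=K, OF P, of y "- \<lfloor>y\<rfloor>"] by (simp add: frac_def)
  then show ?thesis using frac_add_of_int_right[of "K y" "- \<lfloor>y\<rfloor>"] by simp
qed

lemma frac_frac_add: fixes a b :: real shows "frac (frac a + b) = frac (a + b)"
proof -
  have "frac a + b = (a + b) + of_int (- \<lfloor>a\<rfloor>)" by (simp add: frac_def)
  then show ?thesis by (simp only: frac_add_of_int_right)
qed

lemma cc_lemma: fixes K :: "real \<Rightarrow> real" assumes C: "\<And>x. isCont K x" and P: "\<And>x. K (x + 1) = K x + 1"
  shows "circ_continuous (\<lambda>x. frac (K x))"
  unfolding circ_continuous_def
proof (intro ballI allI impI)
  fix x e :: real assume e: "e > 0"
  obtain d where d: "d > 0" "\<forall>y. y \<noteq> x \<and> norm (y - x) < d \<longrightarrow> norm (K y - K x) < e"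
    using LIM_D[OF C[of x, unfolded isCont_def] e] by blast
  have d': "\<bar>K y - K x\<bar> < e" if "\<bar>y - x\<bar> < d" for y
    using d(2) that e by (cases "y = x") auto
  show "\<exists>d>0. \<forall>y\<in>circle. circ_dist x y < d \<longrightarrow> circ_dist (frac (K x)) (frac (K y)) < e"
  proof (intro exI conjI ballI impI)
    show "d > 0" by (rule d(1))
    fix y assume "circ_dist x y < d"
    then have 1: "\<bar>x - y - of_int (round (x - y))\<bar> < d" unfolding circ_dist_def .
    define y' where "y' = y + of_int (round (x - y))"
    have "\<bar>y' - x\<bar> < d" using 1 unfolding y'_def by (simp add: abs_minus_commute algebra_simps)
    then have 2: "\<bar>K y' - K x\<bar> < e" by (rule d')
    have 3: "K y' = K y + of_int (round (x - y))" unfolding y'_def by (rule per_int[where K=K, OF P])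
    have "circ_dist (frac (K x)) (frac (K y)) = circ_dist (K x) (K y)" by (rule cd_frac)
    also have "\<dots> \<le> \<bar>K x - K y - of_int (round (x - y))\<bar>" by (rule cd_le)
    also have "\<dots> < e" using 2 3 by (simp add: abs_minus_commute algebra_simps)
    finally show "circ_dist (frac (K x)) (frac (K y)) < e" .
  qed
qed

lemma conj_from_H:
  assumes F: "circle_lift F" and H: "circle_lift H" and HF: "\<And>x. H (F x) = H x + r"
  shows "conj_to_rotation F"
proof -
  have surj: "\<exists>x. H x = y" for y
  proof -
    define m where "m = \<lfloor>y - H 0\<rfloor>"
    have Hm: "H (of_int m) = H 0 + of_int m" using cl_int[OF H, of 0 m] by simp
    have Hm1: "H (of_int m + 1) = H 0 + of_int m + 1" using cl_per[OF H, of "of_int m"] Hm by simp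
    have "H (of_int m) \<le> y" "y \<le> H (of_int m + 1)" using Hm Hm1 unfolding m_def by linarith+
    then show ?thesis
      using IVT'[where f=H and a="of_int m" and b="of_int m + 1" and y=y] cl_cont_on[OF H] by auto
  qed
  then have sH: "surj H" by (metis surjI)
  have iH: "inj H" using cl_mono[OF H] strict_mono_imp_inj_on by blast
  define Hi where "Hi = inv H"
  have HHi: "H (Hi y) = y" for y unfolding Hi_def using sH by (simp add: surj_f_inv_f)
  have HiH: "Hi (H x) = x" for x unfolding Hi_def using iH by simp
  have Hiper: "Hi (y + 1) = Hi y + 1" for y
  proof -
    have "H (Hi y + 1) = y + 1" using cl_per[OF H] HHi by simp
    then show ?thesis using HiH by metis
  qed
  have Hicont: "isCont Hi y" for y
  proof -
    have "isCont Hi (H (Hi y))"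
      by (rule isCont_inverse_function[where d=1]) (auto simp: HiH cl_isCont[OF H])
    then show ?thesis using HHi by simp
  qed
  have Hper: "H (x + 1) = H x + 1" for x by (rule cl_per[OF H])
  define h where "h x = frac (H x)" for x
  define g where "g y = frac (Hi y)" for y
  have "circ_homeomorphism h g"
    unfolding circ_homeomorphism_def
  proof (intro conjI ballI)
    show "h ` circle \<subseteq> circle" unfolding h_def circle_def by (auto simp: frac_lt_1)
    show "g ` circle \<subseteq> circle" unfolding g_def circle_def by (auto simp: frac_lt_1)
    fix x assume x: "x \<in> circle"
    have "g (h x) = frac (Hi (frac (H x)))" unfolding g_def h_def ..
    also have "\<dots> = frac (Hi (H x))" by (rule frac_K_frac[where K=Hi, OF Hiper])
    also have "\<dots> = x" using x unfolding circle_def by (simp add: HiH)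
    finally show "g (h x) = x" .
  next
    fix y assume y: "y \<in> circle"
    have "h (g y) = frac (H (frac (Hi y)))" unfolding g_def h_def ..
    also have "\<dots> = frac (H (Hi y))" by (rule frac_K_frac[where K=H, OF Hper])
    also have "\<dots> = y" using y unfolding circle_def by (simp add: HHi)
    finally show "h (g y) = y" .
  next
    show "circ_continuous h" unfolding h_def by (rule cc_lemma[where K=H, OF cl_isCont[OF H] Hper])
    show "circ_continuous g" unfolding g_def by (rule cc_lemma[where K=Hi, OF Hicont Hiper])
  qed
  moreover have "\<forall>x\<in>circle. h (circ_map F x) = rotation r (h x)"
  proof
    fix x assume "x \<in> circle"
    have "h (circ_map F x) = frac (H (frac (F x)))" unfolding h_def circ_map_def ..
    also have "\<dots> = frac (H (F x))" by (rule frac_K_frac[where K=H, OF Hper])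
    also have "\<dots> = frac (H x + r)" by (simp add: HF)
    also have "\<dots> = rotation r (h x)" unfolding rotation_def h_def by (simp add: frac_frac_add)
    finally show "h (circ_map F x) = rotation r (h x)" .
  qed
  ultimately show ?thesis unfolding conj_to_rotation_def by blast
qed

lemma periodic_conj:
  assumes F: "circle_lift F" and q: "q > 0" and per: "\<And>x. (F ^^ q) x = x + of_int p"
  shows "conj_to_rotation F"
proof -
  define H where "H x = (\<Sum>k<q. (F ^^ k) x) / real q" for x
  have qr: "real q > 0" using q by simp
  have Hcl: "circle_lift H" unfolding circle_lift_def
  proof (intro conjI allI)
    show "continuous_on UNIV H" unfolding H_def
      by (intro continuous_intros continuous_on_sum) (use cl_cont[OF cl_pow[OF F]] q in auto)
    show "strict_mono H"
    proof (rule strict_monoI)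
      fix x y :: real assume xy: "x < y"
      have "(\<Sum>k<q. (F ^^ k) x) < (\<Sum>k<q. (F ^^ k) y)"
        by (rule sum_strict_mono) (use q xy cl_less_iff[OF cl_pow[OF F]] in auto)
      then show "H x < H y" unfolding H_def using qr by (simp add: divide_strict_right_mono)
    qed
    fix x
    have "(\<Sum>k<q. (F ^^ k) (x + 1)) = (\<Sum>k<q. (F ^^ k) x) + real q"
      by (simp add: cl_per[OF cl_pow[OF F]] sum.distrib)
    then show "H (x + 1) = H x + 1" unfolding H_def using qr by (simp add: add_divide_distrib)
  qed
  have HF: "H (F x) = H x + of_int p / real q" for x
  proof -
    have "(\<Sum>k<q. (F ^^ k) (F x)) = (\<Sum>k<q. (F ^^ Suc k) x)"
      by (simp only: funpow_Suc_right comp_def)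
    also have "\<dots> = (\<Sum>k<Suc q. (F ^^ k) x) - (F ^^ 0) x"
      by (simp only: sum.lessThan_Suc_shift)
    also have "\<dots> = (\<Sum>k<q. (F ^^ k) x) + of_int p" using per[of x] by simp
    finally show ?thesis unfolding H_def using qr by (simp add: add_divide_distrib)
  qed
  show ?thesis by (rule conj_from_H[OF F Hcl HF])
qed



lemma c_over_ln: "(\<lambda>n. c / ln (real n)) \<longlonglongrightarrow> 0"
proof -
  have "filterlim (\<lambda>n. ln (real n)) at_top sequentially"
    using filterlim_compose[OF ln_at_top filterlim_real_sequentially] by (simp add: comp_def)
  then have "filterlim (\<lambda>n. ln (real n)) at_infinity sequentially"
    by (rule filterlim_at_top_imp_at_infinity)
  then show ?thesis by (rule tendsto_divide_0[OF tendsto_const])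
qed

lemma hpol_one:
  assumes q: "q > 0" and N: "N \<ge> 1"
    and b: "\<And>n. n \<ge> 1 \<Longrightarrow> (n - 1) div q + 1 \<le> cover_num F n eps \<and> cover_num F n eps \<le> n * N + 1"
  shows "hpol_eps F eps = 1"
proof -
  let ?r = "\<lambda>n. ln (real (cover_num F n eps)) / ln (real n)"
  let ?L = "\<lambda>n. 1 - ln (real q) / ln (real n)"
  let ?U = "\<lambda>n. 1 + ln (real N + 1) / ln (real n)"
  have qr: "real q > 0" using q by simp
  have evL: "\<forall>\<^sub>F n in sequentially. ?L n \<le> ?r n"
    using eventually_ge_at_top[of 2]
  proof eventually_elim
    case (elim n)
    have lnp: "ln (real n) > 0" using elim by simp
    have bn: "(n - 1) div q + 1 \<le> cover_num F n eps \<and> cover_num F n eps \<le> n * N + 1"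
      by (rule b) (use elim in simp)
    have eq: "q * ((n - 1) div q) + (n - 1) mod q = n - 1" by (rule mult_div_mod_eq)
    have "(n - 1) mod q < q" using q by simp
    then have "n - 1 < q * ((n - 1) div q) + q" using eq by linarith
    then have "n - 1 < q * ((n - 1) div q + 1)" by (simp add: algebra_simps)
    then have "n \<le> q * ((n - 1) div q + 1)" using elim by simp
    also have "\<dots> \<le> q * cover_num F n eps" by (rule mult_le_mono2) (use bn in linarith)
    finally have "real n \<le> real q * real (cover_num F n eps)" by (simp only: of_nat_mult[symmetric] of_nat_le_iff)
    then have 1: "real n / real q \<le> real (cover_num F n eps)" using qr by (simp add: field_simps)
    have np: "real n / real q > 0" using elim qr by simp
    have cpos: "real (cover_num F n eps) > 0" using 1 np by linarith
    have "ln (real n / real q) \<le> ln (real (cover_num F n eps))" using 1 np cpos by simp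
    then have "ln (real n) - ln (real q) \<le> ln (real (cover_num F n eps))"
      using elim qr by (simp add: ln_div)
    then have "(ln (real n) - ln (real q)) / ln (real n) \<le> ?r n"
      using lnp by (simp add: divide_right_mono)
    moreover have "(ln (real n) - ln (real q)) / ln (real n) = ?L n" using lnp by (simp add: diff_divide_distrib)
    ultimately show ?case by simp
  qed
  have evU: "\<forall>\<^sub>F n in sequentially. ?r n \<le> ?U n"
    using eventually_ge_at_top[of 2]
  proof eventually_elim
    case (elim n)
    have lnp: "ln (real n) > 0" using elim by simp
    have bn: "(n - 1) div q + 1 \<le> cover_num F n eps \<and> cover_num F n eps \<le> n * N + 1"
      by (rule b) (use elim in simp)
    have c1: "cover_num F n eps \<ge> 1" using bn by linarith
    have "cover_num F n eps \<le> n * N + 1" using bn by linarith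
    then have "real (cover_num F n eps) \<le> real (n * N + 1)" by (simp only: of_nat_le_iff)
    also have "\<dots> = real n * real N + 1" by simp
    finally have "real (cover_num F n eps) \<le> real n * real N + 1" .
    also have "\<dots> \<le> real n * (real N + 1)" using elim by (simp add: algebra_simps)
    finally have 1: "real (cover_num F n eps) \<le> real n * (real N + 1)" .
    have "ln (real (cover_num F n eps)) \<le> ln (real n * (real N + 1))" using 1 c1 by simp
    also have "\<dots> = ln (real n) + ln (real N + 1)" using elim by (simp add: ln_mult)
    finally have "?r n \<le> (ln (real n) + ln (real N + 1)) / ln (real n)"
      using lnp by (simp add: divide_right_mono)
    also have "\<dots> = ?U n" using lnp by (simp add: add_divide_distrib)
    finally show ?case .
  qed
  have Lt: "?L \<longlonglongrightarrow> 1" using tendsto_diff[OF tendsto_const c_over_ln, of 1 "ln (real q)"] by simp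
  have Ut: "?U \<longlonglongrightarrow> 1" using tendsto_add[OF tendsto_const c_over_ln, of 1 "ln (real N + 1)"] by simp
  have rt: "?r \<longlonglongrightarrow> 1" by (rule tendsto_sandwich[OF evL evU Lt Ut])
  then have "(\<lambda>n. ereal (?r n)) \<longlonglongrightarrow> ereal 1" by (simp only: lim_ereal)
  then have "limsup (\<lambda>n. ereal (?r n)) = ereal 1"
    by (rule lim_imp_Limsup[OF trivial_limit_sequentially])
  then show ?thesis unfolding hpol_eps_def by (simp add: one_ereal_def)
qed

theorem proposition3p1:
  fixes F :: "real \<Rightarrow> real"
  assumes "circle_lift F"
    and "rot_num F \<in> \<rat>"
    and "\<not> conj_to_rotation F"
  shows "(hpol_eps F \<longlongrightarrow> (1 :: ereal)) (at_right 0)"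
proof -
  note F = assms(1)
  obtain p b where b: "b > 0" "rot_num F = of_int p / of_int b"
    using Rats_cases'[OF assms(2)] by metis
  define q where "q = nat b"
  have q: "q > 0" unfolding q_def using b by simp
  have rho: "rot_num F = of_int p / real q" unfolding q_def using b by simp
  let ?G = "\<lambda>x. (F ^^ q) x - of_int p"
  have G: "circle_lift ?G" using cl_shift[OF cl_pow[OF F, of q], of "of_int p"] by simp
  obtain x0 where x0: "?G x0 = x0" using fix_exists[OF F q rho] by blast
  have "\<exists>y. ?G y \<noteq> y"
  proof (rule ccontr)
    assume nex: "\<not> (\<exists>y. ?G y \<noteq> y)"
    have per: "(F ^^ q) x = x + of_int p" for x
    proof -
      have "?G x = x" using nex by blast
      then show ?thesis by simp
    qed
    then have "conj_to_rotation F" by (rule periodic_conj[OF F q])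
    then show False using assms(3) by blast
  qed
  then obtain y where y: "?G y \<noteq> y" by blast
  define c where "c = y + of_int (- \<lfloor>y - x0\<rfloor>)"
  have Gc_eq: "?G c - c = ?G y - y" unfolding c_def using cl_int[OF G, of y "- \<lfloor>y - x0\<rfloor>"] by simp
  have Gcc: "?G c \<noteq> c" using Gc_eq y by linarith
  have c1: "x0 \<le> c" "c < x0 + 1" unfolding c_def by linarith+
  have c2: "c \<noteq> x0" using Gcc x0 by auto
  have "\<exists>\<sigma>>0. \<exists>u. \<forall>i j. i < j \<longrightarrow> \<sigma> \<le> circ_dist ((?G ^^ i) (u i)) ((?G ^^ i) (u j))"
  proof (cases "?G c > c")
    case True
    show ?thesis by (rule sep_up_gen[OF G x0 _ _ True]) (use c1 c2 in auto)
  next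
    case False
    then have lt: "?G c < c" using Gcc by simp
    have fx: "?G (x0 + 1) = x0 + 1" using cl_per[OF G, of x0] x0 by simp
    show ?thesis by (rule sep_down_gen[OF G fx _ _ lt]) (use c1 c2 in auto)
  qed
  then obtain \<sigma> u where sig: "\<sigma> > 0"
    and sepu: "\<And>i j. i < j \<Longrightarrow> \<sigma> \<le> circ_dist ((?G ^^ i) (u i)) ((?G ^^ i) (u j))" by blast
  have one: "hpol_eps F e = 1" if e: "0 < e" "e < \<sigma> / 2" for e
  proof -
    obtain N where N: "N \<ge> 1" "\<forall>n\<ge>1. cover_num F n e \<le> n * N + 1 \<and>
     (\<exists>C. finite C \<and> C \<subseteq> circle \<and> (\<forall>x\<in>circle. \<exists>c\<in>C. bowen_dist F n x c < e))"
      using upper_bound[OF F e(1)] by blast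
    have e2: "2 * e \<le> \<sigma>" using e by simp
    show ?thesis
    proof (rule hpol_one[OF q N(1)])
      fix n :: nat assume n: "n \<ge> 1"
      show "(n - 1) div q + 1 \<le> cover_num F n e \<and> cover_num F n e \<le> n * N + 1"
        using sep_core[OF F q sig sepu e(1) e2 n] N(2) n by blast
    qed
  qed
  have "\<forall>\<^sub>F e in at_right 0. hpol_eps F e = 1"
    unfolding eventually_at_right_field
    by (rule exI[of _ "\<sigma> / 2"]) (use sig one in auto)
  then show ?thesis by (rule tendsto_eventually)
qed


end
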